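(* Let $\lambda\in 5\mathbb{Z}^+$, $r\in\mathbb{Z}^+$, $\mu>0$ and $\sigma>0$ with $\lambda\sigma\in 5\mathbb{N}$, and let $\Lambda$, $\gamma_k$, $\mathbb{W}_k$ be as in the context. For any complex numbers $\{a_k : k\in\Lambda\}$ with $a_{-k} = \overline{a_k}$, the function $$W(t,x) = \sum_{k\in\Lambda} a_k\,\mathbb{W}_k(t,x)$$ is real valued, and for each $\mathring{R}\in\mathring{\mathcal{M}}$, $$\sum_{k\in\Lambda}(\gamma_k(\mathring{R}))^2\,\frac{1}{|\mathbb{T}^2|}\int_{\mathbb{T}^2}\mathbb{W}_k\mathring{\otimes}\mathbb{W}_{-k}\,dx = -\mathring{R}.$$
   Context: $\mathbb{T}^2=\mathbb{R}^2/(2\pi\mathbb{Z}^2)$. $\Lambda^+ = \{\frac15(3e_1\pm4e_2),\frac15(4e_1\pm3e_2)\}$, $\Lambda^- = -\Lambda^+$, $\Lambda=\Lambda^+\cup\Lambda^-$. $\mathring{\mathcal{M}}$ is the space of real symmetric trace-free $2\times2$ matrices, and $f\mathring{\otimes}g = f\otimes g - \frac12 (f\cdot g)\,\mathrm{Id}$ (extended bilinearly to complex vectors). $\{\gamma_k\}_{k\in\Lambda}$ is a family of positive smooth functions on $\mathring{\mathcal{M}}$ with $\gamma_{-k}=\gamma_k$ and $\mathring{R}=\sum_{k\in\Lambda}\gamma_k(\mathring{R})^2\,(k\mathring{\otimes}k)$ for all $\mathring{R}\in\mathring{\mathcal{M}}$. For $k=(k_1,k_2)$, $k^\perp=(-k_2,k_1)$.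 Define $b_k(x) = i k^\perp e^{i\lambda k\cdot x}$. The 2D Dirichlet kernel is $D_r(x) = \frac{1}{2r+1}\sum_{k\in\Omega_r} e^{ik\cdot x}$ with $\Omega_r=\{(k_1,k_2)\in\mathbb{Z}^2 : -r\le k_i\le r\}$. Define $\eta_k(t,x) = D_r(\lambda\sigma(k\cdot x+\mu t),\ \lambda\sigma k^\perp\cdot x)$ for $k\in\Lambda^+$ and $\eta_k = \eta_{-k}$ for $k\in\Lambda^-$, and $\mathbb{W}_k(t,x) = \eta_k(t,x)\,b_k(x)$. *)

theory Defs
  imports "HOL-Analysis.Analysis"
begin

definition vec2 :: "real \<Rightarrow> real \<Rightarrow> real^2" where
  "vec2 a b = (\<chi> i. if i = 1 then a else b)"

definition perp :: "real^2 \<Rightarrow> real^2" where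
  "perp k = vec2 (- (k$2)) (k$1)"

definition LambdaP :: "(real^2) set" where
  "LambdaP = {vec2 (3/5) (4/5), vec2 (3/5) (-4/5), vec2 (4/5) (3/5), vec2 (4/5) (-3/5)}"

definition LambdaM :: "(real^2) set" where
  "LambdaM = uminus ` LambdaP"

definition Lambda :: "(real^2) set" where
  "Lambda = LambdaP \<union> LambdaM"

definition Mo :: "(real^2^2) set" where
  "Mo = {R. transpose R = R \<and> trace R = 0}"

definition rtens :: "real^2 \<Rightarrow> real^2 \<Rightarrow> real^2^2" where
  "rtens f g = (\<chi> i j. f$i * g$j) - ((1/2) * (f \<bullet> g)) *\<^sub>R mat 1"

text \<open>bilinear extension to complex vectors (no conjugation)\<close>
definition ctens :: "complex^2 \<Rightarrow> complex^2 \<Rightarrow> complex^2^2" where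
  "ctens f g = (\<chi> i j. f$i * g$j - (if i = j then (1/2) * (\<Sum>l\<in>UNIV. f$l * g$l) else 0))"

coinductive smooth2 :: "(real^2 \<Rightarrow> real) \<Rightarrow> bool" where
  "(\<forall>x. f differentiable (at x)) \<Longrightarrow>
   (\<forall>i. smooth2 (\<lambda>x. frechet_derivative f (at x) (axis i 1))) \<Longrightarrow> smooth2 f"

definition Mo_param :: "real^2 \<Rightarrow> real^2^2" where
  "Mo_param p = (\<chi> i j. if i = j then (if i = 1 then p$1 else - (p$1)) else p$2)"

definition smooth_on_Mo :: "(real^2^2 \<Rightarrow> real) \<Rightarrow> bool" where
  "smooth_on_Mo g \<longleftrightarrow> smooth2 (g \<circ> Mo_param)"

definition Omega :: "nat \<Rightarrow> (int \<times> int) set" where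
  "Omega r = {(k1, k2). - int r \<le> k1 \<and> k1 \<le> int r \<and> - int r \<le> k2 \<and> k2 \<le> int r}"

definition Dir :: "nat \<Rightarrow> real \<Rightarrow> real \<Rightarrow> complex" where
  "Dir r y1 y2 = (1 / (2 * of_nat r + 1)) *
     (\<Sum>(k1,k2)\<in>Omega r. cis (of_int k1 * y1 + of_int k2 * y2))"

definition eta :: "real \<Rightarrow> real \<Rightarrow> real \<Rightarrow> nat \<Rightarrow> real^2 \<Rightarrow> real \<Rightarrow> real^2 \<Rightarrow> complex" where
  "eta lam sig mu r k t x =
     (let k' = (if k \<in> LambdaP then k else - k) in
      Dir r (lam * sig * (k' \<bullet> x + mu * t)) (lam * sig * (perp k' \<bullet> x)))"

definition bvec :: "real \<Rightarrow> real^2 \<Rightarrow> real^2 \<Rightarrow> complex^2" where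
  "bvec lam k x = (\<chi> i. \<i> * complex_of_real (perp k $ i) * cis (lam * (k \<bullet> x)))"

definition WW :: "real \<Rightarrow> real \<Rightarrow> real \<Rightarrow> nat \<Rightarrow> real^2 \<Rightarrow> real \<Rightarrow> real^2 \<Rightarrow> complex^2" where
  "WW lam sig mu r k t x = eta lam sig mu r k t x *s bvec lam k x"

text \<open>The torus T^2 = R^2/(2 pi Z^2), represented by the fundamental domain [0,2pi]^2.\<close>
definition torus_box :: "(real^2) set" where
  "torus_box = cbox 0 (\<chi> i. 2 * pi)"

end

theory Submission
  imports Defs
begin

lemma vec2_nth[simp]: "vec2 a b $ 1 = a" "vec2 a b $ 2 = b"
  by (simp_all add: vec2_def)

lemma vec2_eta: "vec2 (z$1) (z$2) = z"
  by (simp add: vec2_def vec_eq_iff forall_2)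

lemma cont_vec2: "continuous (at p) (\<lambda>p::real\<times>real. vec2 (fst p) (snd p))"
proof -
  have "continuous_on UNIV (\<lambda>p::real\<times>real. vec2 (fst p) (snd p))"
    unfolding vec2_def by (intro continuous_intros, case_tac "i = 1") (simp_all add: continuous_on_fst continuous_on_snd continuous_on_id)
  then show ?thesis using continuous_on_eq_continuous_at[OF open_UNIV] by blast
qed

lemma fubini_box:
  fixes f :: "real^2 \<Rightarrow> complex"
  assumes "continuous_on torus_box f"
  shows "integral torus_box f = integral {0..2*pi} (\<lambda>x. integral {0..2*pi} (\<lambda>y. f (vec2 x y)))"
proof -
  let ?g = "\<lambda>p::real\<times>real. vec2 (fst p) (snd p)"
  let ?h = "\<lambda>z::real^2. (z$1, z$2)"
  have gimg: "?g ` cbox u v = cbox (vec2 (fst u) (snd u)) (vec2 (fst v) (snd v))" for u v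
  proof (rule set_eqI, rule iffI)
    fix z assume "z \<in> ?g ` cbox u v"
    then show "z \<in> cbox (vec2 (fst u) (snd u)) (vec2 (fst v) (snd v))"
      by (cases u, cases v) (auto simp: mem_box_cart forall_2 cbox_Pair_eq)
  next
    fix z assume "z \<in> cbox (vec2 (fst u) (snd u)) (vec2 (fst v) (snd v))"
    then have "(z$1, z$2) \<in> cbox u v" "z = ?g (z$1, z$2)"
      by (cases u, cases v, auto simp: mem_box_cart forall_2 cbox_Pair_eq vec2_eta)
    then show "z \<in> ?g ` cbox u v" by blast
  qed
  have himg: "?h ` cbox u v = cbox (u$1, u$2) (v$1, v$2)" for u v
  proof (rule set_eqI, rule iffI)
    fix z assume "z \<in> ?h ` cbox u v"
    then show "z \<in> cbox (u$1, u$2) (v$1, v$2)"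
      by (auto simp: mem_box_cart forall_2 cbox_Pair_eq)
  next
    fix z assume "z \<in> cbox (u$1, u$2) (v$1, v$2)"
    then have "vec2 (fst z) (snd z) \<in> cbox u v" "z = ?h (vec2 (fst z) (snd z))"
      by (cases z, auto simp: mem_box_cart forall_2 cbox_Pair_eq)
    then show "z \<in> ?h ` cbox u v" by blast
  qed
  have cont: "measure lborel (?g ` cbox u v) = 1 * measure lborel (cbox u v)" for u v
  proof (cases u, cases v)
    fix u1 u2 v1 v2 assume uv: "u = (u1,u2)" "v = (v1,v2)"
    have e: "cbox (vec2 u1 u2) (vec2 v1 v2) = {} \<longleftrightarrow> \<not> (u1 \<le> v1 \<and> u2 \<le> v2)"
    proof
      assume "cbox (vec2 u1 u2) (vec2 v1 v2) = {}"
      then show "\<not> (u1 \<le> v1 \<and> u2 \<le> v2)"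
        using mem_box_cart(2)[of "vec2 u1 u2" "vec2 u1 u2" "vec2 v1 v2"] by (auto simp: forall_2)
    next
      assume "\<not> (u1 \<le> v1 \<and> u2 \<le> v2)"
      then show "cbox (vec2 u1 u2) (vec2 v1 v2) = {}"
        by (auto simp: mem_box_cart forall_2)
    qed
    show ?thesis
      unfolding gimg uv content_Pair
      by (simp add: content_cbox_if_cart UNIV_2 e content_real_if)
  qed
  have fint: "(f has_integral integral torus_box f) (cbox 0 (\<chi> i. 2*pi))"
    using integrable_continuous[OF assms[unfolded torus_box_def]] torus_box_def
    by (simp add: integrable_integral)
  have "((\<lambda>x. f (?g x)) has_integral (1/1) *\<^sub>R integral torus_box f) (?h ` cbox 0 (\<chi> i. 2*pi))"
    apply (rule has_integral_twiddle[OF _ _ _ _ _ _ cont fint])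
    by (auto simp: vec2_eta cont_vec2 gimg himg)
  moreover have hb: "?h ` cbox 0 (\<chi> i. 2*pi) = cbox (0,0) (2*pi, 2*pi)"
    by (simp add: himg)
  ultimately have "integral torus_box f = integral (cbox (0,0) (2*pi, 2*pi)) (\<lambda>x. f (?g x))"
    by (simp add: integral_unique)
  also have "\<dots> = integral (cbox 0 (2*pi)) (\<lambda>x. integral (cbox 0 (2*pi)) (\<lambda>y. f (?g (x, y))))"
  proof (rule integral_prod_continuous)
    have "continuous_on (cbox (0,0) (2*pi, 2*pi)) ?g"
      by (intro continuous_at_imp_continuous_on ballI cont_vec2)
    moreover have "?g ` cbox (0,0) (2*pi, 2*pi) \<subseteq> torus_box"
      unfolding gimg torus_box_def by (simp add: vec2_def mem_box_cart forall_2 subset_iff)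
    ultimately show "continuous_on (cbox (0,0) (2*pi, 2*pi)) (\<lambda>x. f (?g x))"
      using continuous_on_compose2[OF assms] by blast
  qed
  finally show ?thesis by simp
qed

lemma cis_deriv:
  "((\<lambda>y. cis (c + m * y)) has_vector_derivative (complex_of_real m * (\<i> * cis (c + m * y)))) (at y within S)"
  unfolding has_vector_derivative_def
  by (rule has_derivative_eq_rhs, rule has_derivative_cis, rule has_derivative_add,
      rule has_derivative_const, rule has_derivative_mult_right, rule has_derivative_ident)
     (auto simp: fun_eq_iff scaleR_conv_of_real)

lemma int_cis1:
  fixes m :: int
  shows "integral {0..2*pi} (\<lambda>y. cis (c + of_int m * y)) = (if m = 0 then 2*pi * cis c else 0)"
proof (cases "m = 0")
  case True
  then show ?thesis by (simp add: scaleR_conv_of_real)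
next
  case False
  let ?F = "\<lambda>y. cis (c + of_int m * y) * (1 / (\<i> * of_int m))"
  have "((\<lambda>y. cis (c + of_int m * y)) has_integral ?F (2*pi) - ?F 0) {0..2*pi}"
  proof (rule fundamental_theorem_of_calculus)
    fix y assume "y \<in> {0..2*pi}"
    have "(?F has_vector_derivative (complex_of_real (of_int m) * (\<i> * cis (c + of_int m * y))) * (1 / (\<i> * of_int m))) (at y within {0..2*pi})"
      by (rule has_vector_derivative_mult_left[OF cis_deriv])
    then show "(?F has_vector_derivative cis (c + of_int m * y)) (at y within {0..2*pi})"
      using False by (simp add: field_simps)
  qed simp
  moreover have "?F (2*pi) = ?F 0"
  proof -
    have "cis (c + of_int m * (2*pi)) = cis (c + 2 * pi * of_int m)" by (simp add: algebra_simps)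
    also have "\<dots> = cis c" by (simp add: cis_mult[symmetric])
    finally show ?thesis by simp
  qed
  ultimately show ?thesis using False by (simp add: integral_unique)
qed

lemma int_cis2:
  fixes m1 m2 :: int
  shows "integral torus_box (\<lambda>x. cis (c + of_int m1 * x$1 + of_int m2 * x$2))
    = (if m1 = 0 \<and> m2 = 0 then 4 * pi\<^sup>2 * cis c else 0)"
proof -
  have "integral torus_box (\<lambda>x. cis (c + of_int m1 * x$1 + of_int m2 * x$2))
     = integral {0..2*pi} (\<lambda>x. integral {0..2*pi} (\<lambda>y. cis ((c + of_int m1 * x) + of_int m2 * y)))"
    by (subst fubini_box) (auto intro!: continuous_intros simp: add.assoc)
  also have "\<dots> = integral {0..2*pi} (\<lambda>x. (if m2 = 0 then 2*pi else 0) * cis (c + of_int m1 * x))"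
    by (simp only: int_cis1) (simp add: mult.commute)
  also have "\<dots> = (if m2 = 0 then 2*pi else 0) * integral {0..2*pi} (\<lambda>x. cis (c + of_int m1 * x))"
    by simp
  also have "\<dots> = (if m1 = 0 \<and> m2 = 0 then 4 * pi\<^sup>2 * cis c else 0)"
    by (simp only: int_cis1) (simp add: power2_eq_square)
  finally show ?thesis .
qed

lemma inner2: "(u::real^2) \<bullet> x = u$1 * x$1 + u$2 * x$2"
  by (simp add: inner_vec_def sum_2)

lemma perp_nth[simp]: "perp k $ 1 = - (k$2)" "perp k $ 2 = k$1"
  by (simp_all add: perp_def)

lemma term_int:
  fixes a1 a2 n1 n2 :: int and N :: nat
  assumes k: "k = vec2 (a1/5) (a2/5)" and a: "a1^2 + a2^2 = 25" and L: "L = 5 * real N" and N: "N > 0"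
  shows "integral torus_box (\<lambda>x. cis (of_int n1 * (L * (k \<bullet> x + mu * t)) + of_int n2 * (L * (perp k \<bullet> x))))
    = (if n1 = 0 \<and> n2 = 0 then 4 * pi\<^sup>2 else 0)"
proof -
  define m1 where "m1 = int N * (n1 * a1 - n2 * a2)"
  define m2 where "m2 = int N * (n1 * a2 + n2 * a1)"
  have eq: "of_int n1 * (L * (k \<bullet> x + mu * t)) + of_int n2 * (L * (perp k \<bullet> x))
      = of_int n1 * L * mu * t + of_int m1 * x$1 + of_int m2 * x$2" for x
    unfolding inner2 perp_nth k m1_def m2_def L by (simp add: algebra_simps)
  have iff: "m1 = 0 \<and> m2 = 0 \<longleftrightarrow> n1 = 0 \<and> n2 = 0"
  proof
    assume h: "m1 = 0 \<and> m2 = 0"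
    then have h1: "n1 * a1 = n2 * a2" and h2: "n1 * a2 = - (n2 * a1)"
      using N by (auto simp: m1_def m2_def)
    have "n1 * 25 = 0"
    proof -
      have "n1 * 25 = n1 * a1 * a1 + n1 * a2 * a2" by (subst a[symmetric]) (simp add: power2_eq_square algebra_simps)
      also have "\<dots> = n2 * a2 * a1 - n2 * a1 * a2" using h1 h2 by (simp add: algebra_simps; metis mult.assoc mult.commute)
      finally show ?thesis by simp
    qed
    moreover have "n2 * 25 = 0"
    proof -
      have "n2 * 25 = n2 * a1 * a1 + n2 * a2 * a2" by (subst a[symmetric]) (simp add: power2_eq_square algebra_simps)
      also have "\<dots> = - (n1 * a2 * a1) + n1 * a1 * a2" using h1 h2 by (simp add: algebra_simps; metis mult.assoc mult.commute)
      also have "\<dots> = 0" by simp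
      finally show ?thesis by simp
    qed
    ultimately show "n1 = 0 \<and> n2 = 0" by simp
  qed (auto simp: m1_def m2_def)
  show ?thesis
    unfolding eq int_cis2 using iff by auto
qed

lemma Omega_eq: "Omega r = {- int r..int r} \<times> {- int r..int r}"
  by (auto simp: Omega_def)

lemma Omega_fin: "finite (Omega r)"
  by (simp add: Omega_eq)

lemma Omega_card: "card (Omega r) = (2 * r + 1)^2"
proof -
  have "nat (2 * int r + 1) = 2 * r + 1" by linarith
  then show ?thesis by (simp add: Omega_eq card_cartesian_product power2_eq_square)
qed

lemma Omega_neg: "p \<in> Omega r \<Longrightarrow> (- fst p, - snd p) \<in> Omega r"
  by (auto simp: Omega_def)

lemma Dir_sq: "(Dir r y1 y2)^2 = (1/(2 * of_nat r+1))^2 *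
   (\<Sum>p\<in>Omega r. \<Sum>q\<in>Omega r. cis (of_int (fst p + fst q) * y1 + of_int (snd p + snd q) * y2))"
  unfolding Dir_def power2_eq_square
  by (simp add: sum_product split_def cis_mult algebra_simps)

lemma eta_int:
  fixes a1 a2 :: int and N :: nat
  assumes k: "k = vec2 (a1/5) (a2/5)" and a: "a1^2 + a2^2 = 25" and L: "L = 5 * real N" and N: "N > 0"
  shows "integral torus_box (\<lambda>x. (Dir r (L * (k \<bullet> x + mu * t)) (L * (perp k \<bullet> x)))^2) = 4 * pi\<^sup>2"
proof -
  let ?T = "\<lambda>p q x. cis (of_int (fst p + fst q) * (L * (k \<bullet> x + mu * t)) + of_int (snd p + snd q) * (L * (perp k \<bullet> x)))"
  have intg: "?T p q integrable_on torus_box" for p q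
    unfolding torus_box_def by (intro integrable_continuous continuous_intros)
  have "integral torus_box (\<lambda>x. (Dir r (L * (k \<bullet> x + mu * t)) (L * (perp k \<bullet> x)))^2)
     = (1/(2 * of_nat r+1))^2 * (\<Sum>p\<in>Omega r. \<Sum>q\<in>Omega r. integral torus_box (?T p q))"
  proof -
    have s1: "integral torus_box (\<lambda>x. \<Sum>p\<in>Omega r. \<Sum>q\<in>Omega r. ?T p q x) = (\<Sum>p\<in>Omega r. integral torus_box (\<lambda>x. \<Sum>q\<in>Omega r. ?T p q x))"
      by (rule integral_sum[OF Omega_fin], rule integrable_sum[OF Omega_fin], rule intg)
    have s2: "integral torus_box (\<lambda>x. \<Sum>q\<in>Omega r. ?T p q x) = (\<Sum>q\<in>Omega r. integral torus_box (?T p q))" for p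
      by (rule integral_sum[OF Omega_fin], rule intg)
    show ?thesis
      unfolding Dir_sq integral_mult_right s1 s2 ..
  qed
  also have "\<dots> = (1/(2 * of_nat r+1))^2 * (\<Sum>p\<in>Omega r. \<Sum>q\<in>Omega r. if q = (- fst p, - snd p) then 4 * pi\<^sup>2 else 0)"
  proof -
    have "integral torus_box (?T p q) = (if q = (- fst p, - snd p) then 4 * pi\<^sup>2 else 0)" for p q
      using term_int[OF k a L N, of "fst p + fst q" mu t "snd p + snd q"]
      by (cases p; cases q) auto
    then show ?thesis by simp
  qed
  also have "\<dots> = (1/(2 * of_nat r+1))^2 * (\<Sum>p\<in>Omega r. 4 * pi\<^sup>2)"
    using Omega_neg by (simp add: Omega_fin sum.delta)
  also have "\<dots> = 4 * pi\<^sup>2"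
  proof -
    have h: "2 * complex_of_nat r + 1 = of_nat (2*r+1)" by simp
    have "(2 * complex_of_nat r + 1) \<noteq> 0" unfolding h of_nat_eq_0_iff by simp
    then show ?thesis by (simp add: Omega_card field_simps h)
  qed
  finally show ?thesis .
qed

lemma LambdaP_cases:
  assumes "k \<in> LambdaP"
  shows "\<exists>(a1::int) (a2::int). k = vec2 (real_of_int a1/5) (real_of_int a2/5) \<and> (a1^2 + a2^2 :: int) = 25 \<and> (a1::int) > 0"
proof -
  have "k = vec2 (of_int 3/5) (of_int 4/5) \<or> k = vec2 (of_int 3/5) (of_int (-4)/5) \<or>
        k = vec2 (of_int 4/5) (of_int 3/5) \<or> k = vec2 (of_int 4/5) (of_int (-3)/5)"
    using assms by (simp add: LambdaP_def)
  then show ?thesis by (elim disjE) (rule exI, rule exI, rule conjI, assumption, simp)+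
qed

lemma LambdaP_pos: "k \<in> LambdaP \<Longrightarrow> k$1 > 0"
  using LambdaP_cases by fastforce

lemma LambdaP_norm: "k \<in> LambdaP \<Longrightarrow> (k$1)^2 + (k$2)^2 = 1"
proof -
  assume "k \<in> LambdaP"
  then obtain a1 a2 :: int where k: "k = vec2 (a1/5) (a2/5)" and a: "a1^2 + a2^2 = 25"
    using LambdaP_cases by blast
  have "real_of_int (a1^2 + a2^2) = 25" using a by simp
  then show ?thesis unfolding k by (simp add: power_divide add_divide_distrib[symmetric])
qed

lemma Lambda_neg: "k \<in> Lambda \<Longrightarrow> - k \<in> Lambda"
  by (auto simp: Lambda_def LambdaM_def)

lemma Lambda_norm: "k \<in> Lambda \<Longrightarrow> (k$1)^2 + (k$2)^2 = 1"
  using LambdaP_norm by (auto simp: Lambda_def LambdaM_def)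

lemma LambdaP_neg_notin: "k \<in> LambdaP \<Longrightarrow> - k \<notin> LambdaP"
  using LambdaP_pos[of k] LambdaP_pos[of "-k"] by auto

lemma eta_neg: "k \<in> Lambda \<Longrightarrow> eta lam sig mu r (- k) t x = eta lam sig mu r k t x"
  using LambdaP_neg_notin[of k] LambdaP_neg_notin[of "-k"]
  by (auto simp: eta_def Lambda_def LambdaM_def Let_def)

lemma Dir_real: "cnj (Dir r y1 y2) = Dir r y1 y2"
proof -
  have "cnj (\<Sum>(k1,k2)\<in>Omega r. cis (of_int k1 * y1 + of_int k2 * y2))
      = (\<Sum>p\<in>Omega r. cis (- (of_int (fst p) * y1 + of_int (snd p) * y2)))"
    by (simp add: split_def cis_cnj)
  also have "\<dots> = (\<Sum>p\<in>Omega r. cis (of_int (fst p) * y1 + of_int (snd p) * y2))"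
    by (rule sum.reindex_bij_witness[of _ "\<lambda>p. (- fst p, - snd p)" "\<lambda>p. (- fst p, - snd p)"])
       (auto simp: Omega_neg)
  finally show ?thesis by (simp add: Dir_def split_def)
qed

lemma eta_real: "cnj (eta lam sig mu r k t x) = eta lam sig mu r k t x"
  by (simp add: eta_def Let_def Dir_real)

lemma perp_neg: "perp (- k) $ i = - (perp k $ i)"
  by (simp add: perp_def vec2_def)

lemma WW_neg: "k \<in> Lambda \<Longrightarrow> WW lam sig mu r (- k) t x $ i = cnj (WW lam sig mu r k t x $ i)"
  by (simp add: WW_def bvec_def eta_neg perp_neg eta_real cis_cnj)

lemma cont_eta: "continuous_on S (\<lambda>x. eta lam sig mu r k t x)"
  unfolding eta_def Dir_def Let_def split_def by (intro continuous_intros)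

lemma part1:
  assumes a_conj: "\<forall>k\<in>Lambda. a (- k) = cnj (a k)"
  shows "Im ((\<Sum>k\<in>Lambda. a k *s WW lam sig mu r k t x) $ i) = 0"
proof -
  define S where "S = (\<Sum>k\<in>Lambda. a k * WW lam sig mu r k t x $ i)"
  have e: "(\<Sum>k\<in>Lambda. a k *s WW lam sig mu r k t x) $ i = S"
    by (simp add: S_def sum_component)
  have "S = (\<Sum>k\<in>Lambda. a (- k) * WW lam sig mu r (- k) t x $ i)"
    unfolding S_def
    by (rule sum.reindex_bij_witness[of _ uminus uminus]) (auto simp: Lambda_neg)
  also have "\<dots> = (\<Sum>k\<in>Lambda. cnj (a k * WW lam sig mu r k t x $ i))"
    by (rule sum.cong) (auto simp: a_conj WW_neg)
  also have "\<dots> = cnj S" by (simp add: S_def)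
  finally have "S = cnj S" .
  then have "Im S = Im (cnj S)" by (rule arg_cong)
  then have "Im S = 0" by simp
  then show ?thesis using e by simp
qed

lemma cis_neg_mult: "cis a * cis (- a) = 1"
  by (simp add: cis_mult)

lemma ctens_eq:
  assumes k: "k \<in> Lambda"
  shows "ctens (WW lam sig mu r k t x) (WW lam sig mu r (- k) t x)
    = (\<chi> i j. (eta lam sig mu r k t x)^2 * complex_of_real (- (rtens k k $ i $ j)))"
proof -
  define E where "E = eta lam sig mu r k t x"
  define C where "C = cis (lam * (k \<bullet> x))"
  have CC: "C * cis (- (lam * (k \<bullet> x))) = 1" unfolding C_def by (rule cis_neg_mult)
  have n: "(k$1)^2 + (k$2)^2 = 1" using Lambda_norm[OF k] .
  have n': "(complex_of_real (k$1))^2 + (complex_of_real (k$2))^2 = 1"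
    using arg_cong[OF n, of complex_of_real] by simp
  have C0: "C \<noteq> 0" unfolding C_def by simp
  have Ci: "cis (- (lam * (k \<bullet> x))) = inverse C" using CC C0 by (simp add: field_simps)
  have w1: "WW lam sig mu r k t x $ i = E * (\<i> * complex_of_real (perp k $ i) * C)" for i
    by (simp add: WW_def bvec_def E_def C_def)
  have w2: "WW lam sig mu r (- k) t x $ i = E * (\<i> * complex_of_real (- perp k $ i) * inverse C)" for i
    by (simp add: WW_def bvec_def E_def eta_neg[OF k] perp_neg Ci[symmetric])
  have m: "mat 1 $ i $ j = (if i = j then 1 else (0::real))" for i j
    by (simp add: mat_def)
  show ?thesis
    unfolding E_def[symmetric] vec_eq_iff forall_2
    using C0
    by (simp add: ctens_def rtens_def w1 w2 sum_2 m inner2 field_simps power2_eq_square; simp add: algebra_simps)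
qed

lemma int_eta2:
  assumes k: "k \<in> Lambda" and L: "lam * sig = 5 * real N" and N: "N > 0"
  shows "integral torus_box (\<lambda>x. (eta lam sig mu r k t x)^2) = 4 * pi\<^sup>2"
proof -
  define k' where "k' = (if k \<in> LambdaP then k else - k)"
  have k': "k' \<in> LambdaP" using k by (auto simp: k'_def Lambda_def LambdaM_def)
  then obtain a1 a2 :: int where kk: "k' = vec2 (real_of_int a1/5) (real_of_int a2/5)" and a: "a1^2 + a2^2 = 25"
    using LambdaP_cases by blast
  have e: "eta lam sig mu r k t x = Dir r ((lam * sig) * (k' \<bullet> x + mu * t)) ((lam * sig) * (perp k' \<bullet> x))" for x
    by (simp add: eta_def Let_def k'_def)
  show ?thesis
    unfolding e by (rule eta_int[OF kk a L N])
qed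

lemma int_ctens:
  assumes k: "k \<in> Lambda" and L: "lam * sig = 5 * real N" and N: "N > 0"
  shows "integral torus_box (\<lambda>x. ctens (WW lam sig mu r k t x) (WW lam sig mu r (- k) t x))
     = (\<chi> i j. 4 * pi\<^sup>2 * complex_of_real (- (rtens k k $ i $ j)))"
proof -
  let ?c = "\<lambda>i j. complex_of_real (- (rtens k k $ i $ j))"
  let ?F = "\<lambda>x. (\<chi> i j. (eta lam sig mu r k t x)^2 * ?c i j)"
  have cF: "continuous_on torus_box ?F"
    by (intro continuous_on_vec_lambda continuous_intros cont_eta)
  have iF: "?F integrable_on torus_box"
    unfolding torus_box_def by (rule integrable_continuous, rule cF[unfolded torus_box_def])
  have iFi: "(\<lambda>x. ?F x $ i) integrable_on torus_box" for i
    unfolding torus_box_def by (rule integrable_continuous, unfold torus_box_def[symmetric])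
      (intro continuous_on_vec_lambda continuous_intros cont_eta)
  have "integral torus_box ?F $ i $ j = 4 * pi\<^sup>2 * ?c i j" for i j
  proof -
    have "integral torus_box ?F $ i $ j = integral torus_box (\<lambda>x. ?F x $ i $ j)"
      using integral_linear[OF iF bounded_linear_vec_nth[of i], unfolded o_def] integral_linear[OF iFi[of i] bounded_linear_vec_nth[of j], unfolded o_def]
      by simp
    also have "\<dots> = integral torus_box (\<lambda>x. (eta lam sig mu r k t x)^2) * ?c i j"
      by simp
    also have "\<dots> = 4 * pi\<^sup>2 * ?c i j" by (simp add: int_eta2[OF k L N])
    finally show ?thesis .
  qed
  then show ?thesis
    by (simp add: ctens_eq[OF k] vec_eq_iff)
qed

theorem lemma4p2:
  fixes lam :: nat and r :: nat and mu sig :: real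
    and gamma :: "real^2 \<Rightarrow> real^2^2 \<Rightarrow> real"
    and a :: "real^2 \<Rightarrow> complex"
  assumes lam: "lam > 0" "5 dvd lam"
    and r: "r > 0"
    and mu: "mu > 0" and sig: "sig > 0"
    and lamsig: "\<exists>n::nat. real lam * sig = 5 * real n"
    and gamma_pos: "\<forall>k\<in>Lambda. \<forall>R\<in>Mo. gamma k R > 0"
    and gamma_smooth: "\<forall>k\<in>Lambda. smooth_on_Mo (gamma k)"
    and gamma_sym: "\<forall>k\<in>Lambda. \<forall>R\<in>Mo. gamma (- k) R = gamma k R"
    and gamma_dec: "\<forall>R\<in>Mo. R = (\<Sum>k\<in>Lambda. (gamma k R)\<^sup>2 *\<^sub>R rtens k k)"
    and a_conj: "\<forall>k\<in>Lambda. a (- k) = cnj (a k)"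
  shows "(\<forall>t x i. Im ((\<Sum>k\<in>Lambda. a k *s WW (real lam) sig mu r k t x) $ i) = 0)
    \<and> (\<forall>R\<in>Mo. \<forall>t.
         (\<Sum>k\<in>Lambda. (gamma k R)\<^sup>2 *\<^sub>R
            ((1 / (4 * pi\<^sup>2)) *\<^sub>R integral torus_box
               (\<lambda>x. ctens (WW (real lam) sig mu r k t x) (WW (real lam) sig mu r (- k) t x))))
         = - (\<chi> i j. complex_of_real (R $ i $ j)))"
proof (intro conjI allI ballI)
  fix t x i
  show "Im ((\<Sum>k\<in>Lambda. a k *s WW (real lam) sig mu r k t x) $ i) = 0"
    by (rule part1[OF a_conj])
next
  fix R t assume R: "R \<in> Mo"
  obtain N :: nat where L: "real lam * sig = 5 * real N" using lamsig by blast
  have N: "N > 0"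
  proof (rule ccontr)
    assume "\<not> N > 0"
    then have "real lam * sig = 0" using L by simp
    then show False using lam sig by simp
  qed
  have "(\<Sum>k\<in>Lambda. (gamma k R)\<^sup>2 *\<^sub>R
            ((1 / (4 * pi\<^sup>2)) *\<^sub>R integral torus_box
               (\<lambda>x. ctens (WW (real lam) sig mu r k t x) (WW (real lam) sig mu r (- k) t x))))
      = (\<Sum>k\<in>Lambda. (\<chi> i j. complex_of_real (- ((gamma k R)\<^sup>2 * rtens k k $ i $ j))))"
    proof (rule sum.cong)
    fix k assume k: "k \<in> Lambda"
    show "(gamma k R)\<^sup>2 *\<^sub>R ((1 / (4 * pi\<^sup>2)) *\<^sub>R integral torus_box
               (\<lambda>x. ctens (WW (real lam) sig mu r k t x) (WW (real lam) sig mu r (- k) t x)))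
       = (\<chi> i j. complex_of_real (- ((gamma k R)\<^sup>2 * rtens k k $ i $ j)))"
      unfolding int_ctens[OF k L N] by (simp add: vec_eq_iff; simp add: scaleR_conv_of_real)
  qed simp
  also have "\<dots> = - (\<chi> i j. complex_of_real (R $ i $ j))"
  proof -
    have "R $ i $ j = (\<Sum>k\<in>Lambda. (gamma k R)\<^sup>2 * rtens k k $ i $ j)" for i j
      by (subst gamma_dec[rule_format, OF R]) (simp add: sum_component)
    then show ?thesis
      by (simp add: vec_eq_iff sum_component sum_negf)
  qed
  finally show "(\<Sum>k\<in>Lambda. (gamma k R)\<^sup>2 *\<^sub>R
            ((1 / (4 * pi\<^sup>2)) *\<^sub>R integral torus_box
               (\<lambda>x. ctens (WW (real lam) sig mu r k t x) (WW (real lam) sig mu r (- k) t x))))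
      = - (\<chi> i j. complex_of_real (R $ i $ j))" .
qed

end
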